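(* There is a constant $C_2>0$, depending only on $p$, such that for every sequence $(\mathcal K_\ell)_{\ell\in\mathbb N_0}$ as below, every $L\in\mathbb N_0$, every choice of nodes $\widetilde z_{\ell,i}$ as below, every $m\in\mathbb N_0$ and every $z\in\mathcal N_L$, the set $$\mathcal Z_m(z):=\{(\ell,i):\ell\in\{0,\dots,L\},\ i\in\widetilde{\mathcal I}_\ell,\ {\rm level}_\ell(\widetilde z_{\ell,i})=m,\ z=\widetilde z_{\ell,i}\}$$ satisfies $|\mathcal Z_m(z)|\le C_2$.
   Context: Geometry: $\Omega\subset\mathbb R^2$ is a bounded simply connected Lipschitz domain with piecewise smooth boundary, $\Gamma\subseteq\partial\Omega$ is connected with Lipschitz relative boundary. Either $\Gamma=\partial\Omega$ (closed case), parametrized by a continuous, piecewise continuously differentiable $\gamma:[a,b]\to\Gamma$ with $\gamma(a)=\gamma(b)$ and $\gamma|_{[a,b)}$ bijective, or $\Gamma\subsetneq\partial\Omega$ (open case), parametrized by a bijective continuous piecewise $C^1$ map $\gamma:[a,b]\to\Gamma$; the one-sided derivatives satisfy $\gamma^{\prime_\ell}(t)\neq0$ for $t\in(a,b]$, $\gamma^{\prime_r}(t)\ne0$ for $t\in[a,b)$, and $\gamma^{\prime_\ell}(t)+c\gamma^{\prime_r}(t)\ne0$ for all $c>0$ (for $t\in[a,b]$ in the closed, $t\in(a,b)$ in the open case). Write $\gamma^{-1}:=(\gamma|_{[a,b)})^{-1}$. Set $o=0$ in the closed and $o=1$ in the open case. Fix $p\in\mathbb N$. Knot vectors: a knot vector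 $\mathcal K_\bullet$ consists of parameter nodes $a=\hat z_0<\dots<\hat z_n=b$ such that $\gamma$ is $C^1$ on each $[\hat z_{j-1},\hat z_j]$, with multiplicities $\#_\bullet\in\{1,\dots,p\}$ at interior nodes and $p+1$ at $\hat z_0,\hat z_n$; nodes $\mathcal N_\bullet=\{\gamma(\hat z_j)\}$ (multiplicities transferred), $N_\bullet=\sum_{j=1}^n\#_\bullet\hat z_j$; the mesh $\mathcal T_\bullet$ consists of the elements $\gamma([\hat z_{j-1},\hat z_j])$; $\hat\kappa_\bullet=\max\{|\gamma^{-1}(T)|/|\gamma^{-1}(T')|:T,T'\in\mathcal T_\bullet,T\cap T'\ne\emptyset\}$. The parameter knots list $\hat z_1,\dots,\hat z_n$ (closed, indices $1,\dots,N_\bullet$) resp. $\hat z_0,\dots,\hat z_n$ (open, indices $-p,\dots,N_\bullet$) increasingly with multiplicity, extended to a nondecreasing $(t_{\bullet,i})_{i\in\mathbb Z}$ with $t_{\bullet,-p}=\dots=t_{\bullet,0}=a$, $t_{\bullet,i}\to\pm\infty$, identically outside $(a,b]$ for all knot vectors. A fixed initial knot vector $\mathcal K_0$ (mesh $\mathcal T_0$) and $\hat\kappa_{\max}\ge1$ are given; $\mathbb K$ is the set of knot vectors with $\hat\kappa_\bullet\le\hat\kappa_{\max}$ obtained from $\mathcal K_0$ by dyadic bisections in the parameter domain and multiplicity increases. $\mathcal K_\circ\in\mathrm{refine}(\mathcal K_\bullet)$ means $\mathcal N_\bullet\subseteq\mathcal N_\circ$, $\#_\bullet z\le\#_\circ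 z$ for $z\in\mathcal N_\bullet$, and every $T\in\mathcal T_\circ$ lies in some $T'\in\mathcal T_\bullet$ with $|\gamma^{-1}(T')|=2^j|\gamma^{-1}(T)|$, $j\in\mathbb N_0$. $(\mathcal K_\ell)_{\ell\in\mathbb N_0}$ is a sequence in $\mathbb K$ starting with $\mathcal K_0$ and with $\mathcal K_{\ell+1}\in\mathrm{refine}(\mathcal K_\ell)$. B-splines: $\hat B_{\bullet,i,0}=\chi_{[t_{\bullet,i-1},t_{\bullet,i})}$, $\hat B_{\bullet,i,q}=\beta_{\bullet,i-1,q}\hat B_{\bullet,i,q-1}+(1-\beta_{\bullet,i,q})\hat B_{\bullet,i+1,q-1}$, $\beta_{\bullet,i,q}(t)=(t-t_{\bullet,i})/(t_{\bullet,i+q}-t_{\bullet,i})$ if $t_{\bullet,i}\neq t_{\bullet,i+q}$, else $0$. Weights/NURBS: initial weights $w_{0,i}>0$ ($i=1-p,\dots,N_0-p$, $w_{0,1-p}=w_{0,N_0-p}$), $\hat w=\sum_kw_{0,k}\hat B_{0,k,p}|_{[a,b]}$; for $\mathcal K_\bullet$, $w_{\bullet,i}$ are the unique coefficients with $\hat w=\sum_kw_{\bullet,k}\hat B_{\bullet,k,p}$ on $[a,b]$; $R_{\bullet,i,p}=(w_{\bullet,i}\hat B_{\bullet,i,p}/\hat w)\circ\gamma^{-1}$, $\bar R_{\bullet,1-p,p}=R_{\bullet,1-p,p}+R_{\bullet,N_\bullet-p,p}$, $\bar R_{\bullet,i,p}=R_{\bullet,i,p}$ otherwise. Multilevel index sets: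 $\widetilde{\mathcal N}_{0\setminus-1}=\mathcal N_0$ and, for $\ell\ge1$, $\widetilde{\mathcal N}_{\ell\setminus\ell-1}=(\mathcal N_\ell\setminus\mathcal N_{\ell-1})\cup\{z\in\mathcal N_\ell\cap\mathcal N_{\ell-1}:\#_\ell z>\#_{\ell-1}z\}$; $\widetilde{\mathcal I}_\ell=\{i\in\{1-p+o,\dots,N_\ell-p-1\}:\mathrm{supp}(\bar R_{\ell,i,p})\cap\widetilde{\mathcal N}_{\ell\setminus\ell-1}\neq\emptyset\}$. For all $\ell$ and $i\in\widetilde{\mathcal I}_\ell$ a node $\widetilde z_{\ell,i}\in\widetilde{\mathcal N}_{\ell\setminus\ell-1}\cap\mathrm{supp}(\bar R_{\ell,i,p})$ is fixed. Level: for $T\in\mathcal T_\bullet$ with ancestor $T_0\in\mathcal T_0$ ($T\subseteq T_0$), $\mathrm{gen}(T)=\log_2(|\gamma^{-1}(T_0)|/|\gamma^{-1}(T)|)\in\mathbb N_0$; for $z\in\mathcal N_\bullet$, ${\rm level}_\bullet(z)=\max\{\mathrm{gen}(T):T\in\mathcal T_\bullet,z\in T\}$. *)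

theory Defs
  imports "HOL-Analysis.Analysis"
begin

definition C1_on :: "(real \<Rightarrow> real^2) \<Rightarrow> real \<Rightarrow> real \<Rightarrow> bool" where
  "C1_on g c d \<longleftrightarrow> (\<exists>g'. continuous_on {c..d} g' \<and>
      (\<forall>t\<in>{c..d}. (g has_vector_derivative g' t) (at t within {c..d})))"

definition piecewise_C1 :: "(real \<Rightarrow> real^2) \<Rightarrow> real \<Rightarrow> real \<Rightarrow> bool" where
  "piecewise_C1 g a b \<longleftrightarrow> (\<exists>S. finite S \<and> a \<in> S \<and> b \<in> S \<and> S \<subseteq> {a..b} \<and>
      (\<forall>c\<in>S. \<forall>d\<in>S. c < d \<and> {c<..<d} \<inter> S = {} \<longrightarrow> C1_on g c d))"

text \<open>Lipschitz domain in the plane: bounded open set which near every boundary point is,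
  after a rotation/reflection, the strict epigraph of a Lipschitz function.\<close>
definition lipschitz_domain :: "(real^2) set \<Rightarrow> bool" where
  "lipschitz_domain \<Omega> \<longleftrightarrow> open \<Omega> \<and> bounded \<Omega> \<and>
     (\<forall>x\<in>frontier \<Omega>. \<exists>r>0. \<exists>Q :: real^2 \<Rightarrow> real^2. \<exists>f :: real \<Rightarrow> real. \<exists>L.
        orthogonal_transformation Q \<and> L-lipschitz_on UNIV f \<and>
        \<Omega> \<inter> ball x r = {y \<in> ball x r. f ((Q y) $ 1) < (Q y) $ 2})"

definition piecewise_smooth_boundary :: "(real^2) set \<Rightarrow> bool" where
  "piecewise_smooth_boundary \<Omega> \<longleftrightarrow> (\<exists>g c d. c < d \<and> continuous_on {c..d} g \<and>
      piecewise_C1 g c d \<and> g c = g d \<and> inj_on g {c..<d} \<and> g ` {c..d} = frontier \<Omega>)"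

text \<open>Standing assumptions on Omega, gamma, [a,b]; cl = True is the closed case
  (Gamma = boundary of Omega), cl = False the open case.\<close>
definition geometry :: "(real^2) set \<Rightarrow> (real \<Rightarrow> real^2) \<Rightarrow> real \<Rightarrow> real \<Rightarrow> bool \<Rightarrow> bool" where
  "geometry \<Omega> g a b cl \<longleftrightarrow>
     bounded \<Omega> \<and> open \<Omega> \<and> connected \<Omega> \<and> simply_connected \<Omega> \<and>
     lipschitz_domain \<Omega> \<and> piecewise_smooth_boundary \<Omega> \<and>
     a < b \<and> continuous_on {a..b} g \<and> piecewise_C1 g a b \<and>
     (if cl then g a = g b \<and> inj_on g {a..<b} \<and> g ` {a..b} = frontier \<Omega>
      else inj_on g {a..b} \<and> g ` {a..b} \<subseteq> frontier \<Omega> \<and> g ` {a..b} \<noteq> frontier \<Omega>) \<and>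
     \<comment> \<open>left derivatives nonzero on (a,b]\<close>
     (\<forall>t\<in>{a<..b}. \<forall>v. (g has_vector_derivative v) (at t within {a..t}) \<longrightarrow> v \<noteq> 0) \<and>
     \<comment> \<open>right derivatives nonzero on [a,b)\<close>
     (\<forall>t\<in>{a..<b}. \<forall>v. (g has_vector_derivative v) (at t within {t..b}) \<longrightarrow> v \<noteq> 0) \<and>
     \<comment> \<open>no cusps at interior parameters\<close>
     (\<forall>t\<in>{a<..<b}. \<forall>vl vr c. c > 0 \<and> (g has_vector_derivative vl) (at t within {a..t}) \<and>
         (g has_vector_derivative vr) (at t within {t..b}) \<longrightarrow> vl + c *\<^sub>R vr \<noteq> 0) \<and>
     \<comment> \<open>closed case: no cusp at gamma(a)=gamma(b) (left derivative at a = left derivative at b,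
         right derivative at b = right derivative at a)\<close>
     (cl \<longrightarrow> (\<forall>vl vr c. c > 0 \<and> (g has_vector_derivative vl) (at b within {a..b}) \<and>
         (g has_vector_derivative vr) (at a within {a..b}) \<longrightarrow> vl + c *\<^sub>R vr \<noteq> 0))"

text \<open>A knot vector is represented by the sorted list ts = (t_{-p},...,t_N) of all parameter
  knots repeated according to multiplicity (a and b with multiplicity p+1).\<close>

definition elems :: "real list \<Rightarrow> (real \<times> real) set" where
  "elems ts = {(c, d). c \<in> set ts \<and> d \<in> set ts \<and> c < d \<and> (\<forall>x\<in>set ts. \<not> (c < x \<and> x < d))}"

definition kv_valid :: "nat \<Rightarrow> (real \<Rightarrow> real^2) \<Rightarrow> real \<Rightarrow> real \<Rightarrow> real list \<Rightarrow> bool" where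
  "kv_valid p g a b ts \<longleftrightarrow> sorted ts \<and> ts \<noteq> [] \<and> hd ts = a \<and> last ts = b \<and>
     count_list ts a = p + 1 \<and> count_list ts b = p + 1 \<and>
     (\<forall>x\<in>set ts - {a, b}. count_list ts x \<le> p) \<and>
     (\<forall>e\<in>elems ts. C1_on g (fst e) (snd e))"

definition Nk :: "nat \<Rightarrow> real list \<Rightarrow> int" where
  "Nk p ts = int (length ts) - int p - 1"

text \<open>extended knot sequence t_i, i in Z (fixed extension outside the indices -p..N)\<close>
definition knot :: "nat \<Rightarrow> real \<Rightarrow> real \<Rightarrow> real list \<Rightarrow> int \<Rightarrow> real" where
  "knot p a b ts i = (if - int p \<le> i \<and> i \<le> Nk p ts then ts ! nat (i + int p)
      else if i < - int p then a + of_int (i + int p) else b + of_int (i - Nk p ts))"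

definition nodes :: "(real \<Rightarrow> real^2) \<Rightarrow> real list \<Rightarrow> (real^2) set" where
  "nodes g ts = g ` set ts"

definition nmult :: "(real \<Rightarrow> real^2) \<Rightarrow> real list \<Rightarrow> real^2 \<Rightarrow> nat" where
  "nmult g ts z = (if z \<in> g ` set ts then count_list ts (SOME t. t \<in> set ts \<and> g t = z) else 0)"

definition kappa :: "(real \<Rightarrow> real^2) \<Rightarrow> real list \<Rightarrow> real" where
  "kappa g ts = Max {(snd e - fst e) / (snd e' - fst e') | e e'. e \<in> elems ts \<and> e' \<in> elems ts \<and>
      g ` {fst e..snd e} \<inter> g ` {fst e'..snd e'} \<noteq> {}}"

definition refines :: "(real \<Rightarrow> real^2) \<Rightarrow> real list \<Rightarrow> real list \<Rightarrow> bool" where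
  "refines g ts ts' \<longleftrightarrow> nodes g ts \<subseteq> nodes g ts' \<and>
     (\<forall>z\<in>nodes g ts. nmult g ts z \<le> nmult g ts' z) \<and>
     (\<forall>e\<in>elems ts'. \<exists>e'\<in>elems ts. g ` {fst e..snd e} \<subseteq> g ` {fst e'..snd e'} \<and>
         (\<exists>j::nat. snd e' - fst e' = 2 ^ j * (snd e - fst e)))"

inductive reach :: "nat \<Rightarrow> real \<Rightarrow> real \<Rightarrow> real list \<Rightarrow> real list \<Rightarrow> bool"
  for p :: nat and a b :: real and ts0 :: "real list" where
  base: "reach p a b ts0 ts0"
| bisect: "reach p a b ts0 ts \<Longrightarrow> e \<in> elems ts \<Longrightarrow> reach p a b ts0 (insort ((fst e + snd e) / 2) ts)"
| incr: "reach p a b ts0 ts \<Longrightarrow> x \<in> set ts \<Longrightarrow> x \<noteq> a \<Longrightarrow> x \<noteq> b \<Longrightarrow> count_list ts x < p \<Longrightarrow>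
         reach p a b ts0 (insort x ts)"

definition KK :: "nat \<Rightarrow> (real \<Rightarrow> real^2) \<Rightarrow> real \<Rightarrow> real \<Rightarrow> real list \<Rightarrow> real \<Rightarrow> real list set" where
  "KK p g a b ts0 kmax = {ts. reach p a b ts0 ts \<and> kappa g ts \<le> kmax}"

definition beta :: "(int \<Rightarrow> real) \<Rightarrow> int \<Rightarrow> nat \<Rightarrow> real \<Rightarrow> real" where
  "beta t i q x = (if t i \<noteq> t (i + int q) then (x - t i) / (t (i + int q) - t i) else 0)"

fun Bsp :: "(int \<Rightarrow> real) \<Rightarrow> int \<Rightarrow> nat \<Rightarrow> real \<Rightarrow> real" where
  "Bsp t i 0 x = (if t (i - 1) \<le> x \<and> x < t i then 1 else 0)"
| "Bsp t i (Suc q) x = beta t (i - 1) (Suc q) x * Bsp t i q x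
                       + (1 - beta t i (Suc q) x) * Bsp t (i + 1) q x"

definition what :: "nat \<Rightarrow> real \<Rightarrow> real \<Rightarrow> real list \<Rightarrow> (int \<Rightarrow> real) \<Rightarrow> real \<Rightarrow> real" where
  "what p a b ts0 w0 x = (\<Sum>k\<in>{1 - int p .. Nk p ts0 - int p}. w0 k * Bsp (knot p a b ts0) k p x)"

definition wts :: "nat \<Rightarrow> real \<Rightarrow> real \<Rightarrow> real list \<Rightarrow> (int \<Rightarrow> real) \<Rightarrow> real list \<Rightarrow> int \<Rightarrow> real" where
  "wts p a b ts0 w0 ts = (THE w. (\<forall>k. k \<notin> {1 - int p .. Nk p ts - int p} \<longrightarrow> w k = 0) \<and>
      (\<forall>x\<in>{a..b}. what p a b ts0 w0 x = (\<Sum>k\<in>{1 - int p .. Nk p ts - int p}. w k * Bsp (knot p a b ts) k p x)))"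

definition gamma_inv :: "bool \<Rightarrow> (real \<Rightarrow> real^2) \<Rightarrow> real \<Rightarrow> real \<Rightarrow> real^2 \<Rightarrow> real" where
  "gamma_inv cl g a b z = (THE t. t \<in> (if cl then {a..<b} else {a..b}) \<and> g t = z)"

definition Rn :: "nat \<Rightarrow> bool \<Rightarrow> (real \<Rightarrow> real^2) \<Rightarrow> real \<Rightarrow> real \<Rightarrow> real list \<Rightarrow> (int \<Rightarrow> real)
                  \<Rightarrow> real list \<Rightarrow> int \<Rightarrow> real^2 \<Rightarrow> real" where
  "Rn p cl g a b ts0 w0 ts i z = (let x = gamma_inv cl g a b z in
      wts p a b ts0 w0 ts i * Bsp (knot p a b ts) i p x / what p a b ts0 w0 x)"

definition Rbar :: "nat \<Rightarrow> bool \<Rightarrow> (real \<Rightarrow> real^2) \<Rightarrow> real \<Rightarrow> real \<Rightarrow> real list \<Rightarrow> (int \<Rightarrow> real)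
                  \<Rightarrow> real list \<Rightarrow> int \<Rightarrow> real^2 \<Rightarrow> real" where
  "Rbar p cl g a b ts0 w0 ts i z = (if i = 1 - int p
      then Rn p cl g a b ts0 w0 ts (1 - int p) z + Rn p cl g a b ts0 w0 ts (Nk p ts - int p) z
      else Rn p cl g a b ts0 w0 ts i z)"

definition supp_on :: "(real^2) set \<Rightarrow> (real^2 \<Rightarrow> real) \<Rightarrow> (real^2) set" where
  "supp_on G f = closure {z \<in> G. f z \<noteq> 0}"

definition newnodes :: "(real \<Rightarrow> real^2) \<Rightarrow> (nat \<Rightarrow> real list) \<Rightarrow> nat \<Rightarrow> (real^2) set" where
  "newnodes g Ks l = (if l = 0 then nodes g (Ks 0)
     else (nodes g (Ks l) - nodes g (Ks (l - 1))) \<union>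
          {z \<in> nodes g (Ks l) \<inter> nodes g (Ks (l - 1)). nmult g (Ks (l - 1)) z < nmult g (Ks l) z})"

definition Itilde :: "nat \<Rightarrow> bool \<Rightarrow> (real \<Rightarrow> real^2) \<Rightarrow> real \<Rightarrow> real \<Rightarrow> (int \<Rightarrow> real)
                      \<Rightarrow> (nat \<Rightarrow> real list) \<Rightarrow> nat \<Rightarrow> int set" where
  "Itilde p cl g a b w0 Ks l = {i \<in> {1 - int p + (if cl then 0 else 1) .. Nk p (Ks l) - int p - 1}.
      supp_on (g ` {a..b}) (Rbar p cl g a b (Ks 0) w0 (Ks l) i) \<inter> newnodes g Ks l \<noteq> {}}"

definition gen :: "(real \<Rightarrow> real^2) \<Rightarrow> real list \<Rightarrow> real \<times> real \<Rightarrow> real" where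
  "gen g ts0 e = (let e0 = (THE e0. e0 \<in> elems ts0 \<and> g ` {fst e..snd e} \<subseteq> g ` {fst e0..snd e0})
      in log 2 ((snd e0 - fst e0) / (snd e - fst e)))"

definition level :: "(real \<Rightarrow> real^2) \<Rightarrow> real list \<Rightarrow> real list \<Rightarrow> real^2 \<Rightarrow> real" where
  "level g ts0 ts z = Max {gen g ts0 e | e. e \<in> elems ts \<and> z \<in> g ` {fst e..snd e}}"

definition setting :: "nat \<Rightarrow> (real^2) set \<Rightarrow> (real \<Rightarrow> real^2) \<Rightarrow> real \<Rightarrow> real \<Rightarrow> bool \<Rightarrow> real
     \<Rightarrow> (int \<Rightarrow> real) \<Rightarrow> (nat \<Rightarrow> real list) \<Rightarrow> (nat \<Rightarrow> int \<Rightarrow> real^2) \<Rightarrow> bool" where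
  "setting p \<Omega> g a b cl kmax w0 Ks zt \<longleftrightarrow>
     geometry \<Omega> g a b cl \<and> kv_valid p g a b (Ks 0) \<and> kmax \<ge> 1 \<and>
     (\<forall>i\<in>{1 - int p .. Nk p (Ks 0) - int p}. w0 i > 0) \<and>
     w0 (1 - int p) = w0 (Nk p (Ks 0) - int p) \<and>
     (\<forall>l. Ks l \<in> KK p g a b (Ks 0) kmax) \<and>
     (\<forall>l. refines g (Ks l) (Ks (Suc l))) \<and>
     (\<forall>l i. i \<in> Itilde p cl g a b w0 Ks l \<longrightarrow>
        zt l i \<in> newnodes g Ks l \<inter> supp_on (g ` {a..b}) (Rbar p cl g a b (Ks 0) w0 (Ks l) i))"

definition Zset :: "nat \<Rightarrow> bool \<Rightarrow> (real \<Rightarrow> real^2) \<Rightarrow> real \<Rightarrow> real \<Rightarrow> (int \<Rightarrow> real)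
     \<Rightarrow> (nat \<Rightarrow> real list) \<Rightarrow> (nat \<Rightarrow> int \<Rightarrow> real^2) \<Rightarrow> nat \<Rightarrow> nat \<Rightarrow> real^2 \<Rightarrow> (nat \<times> int) set" where
  "Zset p cl g a b w0 Ks zt L m z = {(l, i). l \<le> L \<and> i \<in> Itilde p cl g a b w0 Ks l \<and>
      level g (Ks 0) (Ks l) (zt l i) = real m \<and> z = zt l i}"

end

theory Submission
  imports Defs
begin

lemma count_insort: "count_list (insort y xs) x = count_list xs x + (if y = x then 1 else 0)"
  by (induction xs) auto

definition inv_kv :: "nat \<Rightarrow> real \<Rightarrow> real \<Rightarrow> real list \<Rightarrow> bool" where
  "inv_kv p a b ts \<longleftrightarrow> sorted ts \<and> set ts \<subseteq> {a..b} \<and> a \<in> set ts \<and> b \<in> set ts \<and>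
     (\<forall>x. count_list ts x \<le> p + 1)"

lemma kv_valid_inv:
  assumes "kv_valid p g a b ts"
  shows "inv_kv p a b ts"
proof -
  have s: "sorted ts" and ne: "ts \<noteq> []" and h: "hd ts = a" and l: "last ts = b"
    using assms by (auto simp: kv_valid_def)
  have a: "a \<in> set ts" using ne h by auto
  have b: "b \<in> set ts" using ne l by auto
  have sub: "set ts \<subseteq> {a..b}"
  proof
    fix x assume x: "x \<in> set ts"
    then obtain k where k: "k < length ts" "ts ! k = x" by (auto simp: in_set_conv_nth)
    have "ts ! 0 \<le> ts ! k" using s k by (intro sorted_nth_mono) auto
    moreover have "ts ! k \<le> ts ! (length ts - 1)" using s k by (intro sorted_nth_mono) auto
    moreover have "ts ! 0 = a" using h ne by (simp add: hd_conv_nth)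
    moreover have "ts ! (length ts - 1) = b" using l ne by (simp add: last_conv_nth)
    ultimately show "x \<in> {a..b}" using k by auto
  qed
  have c: "count_list ts x \<le> p + 1" for x
  proof (cases "x \<in> set ts")
    case True
    then show ?thesis using assms unfolding kv_valid_def
      by (cases "x \<in> {a,b}") (auto, metis DiffI insertE le_SucI singletonD)
  next
    case False
    then show ?thesis by (simp add: count_list_0_iff[THEN iffD2])
  qed
  show ?thesis using s sub a b c by (simp add: inv_kv_def)
qed

lemma reach_inv:
  assumes "reach p a b ts0 ts" "inv_kv p a b ts0" "p \<ge> 1"
  shows "inv_kv p a b ts"
  using assms
proof (induction rule: reach.induct)
  case base
  then show ?case by simp
next
  case (bisect ts e)
  then have I: "inv_kv p a b ts" by simp
  obtain c d where e: "e = (c, d)" by force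
  have cd: "c \<in> set ts" "d \<in> set ts" "c < d" "\<forall>x\<in>set ts. \<not> (c < x \<and> x < d)"
    using bisect.hyps(2) e by (auto simp: elems_def)
  define m where "m = (c + d) / 2"
  have m: "c < m" "m < d" using cd unfolding m_def by auto
  have mn: "m \<notin> set ts" using cd(4) m by auto
  have "m \<in> {a..b}" using I cd m unfolding inv_kv_def by force
  moreover have "count_list (insort m ts) x \<le> p + 1" for x
    using I mn unfolding inv_kv_def count_insort
    by (cases "m = x") (auto simp: count_list_0_iff[THEN iffD2] bisect.prems(2))
  ultimately show ?case using I unfolding e inv_kv_def
    by (simp add: sorted_insort set_insort_key m_def[symmetric])
next
  case (incr ts x)
  then have I: "inv_kv p a b ts" by simp
  have "count_list (insort x ts) y \<le> p + 1" for y
    using I incr.hyps unfolding inv_kv_def count_insort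
    by (cases "x = y") auto
  then show ?case using I incr.hyps unfolding inv_kv_def
    by (auto simp: sorted_insort set_insort_key)
qed


lemma knot_range:
  assumes "inv_kv p a b ts" "- int p \<le> i" "i \<le> Nk p ts"
  shows "knot p a b ts i = ts ! nat (i + int p)" "nat (i + int p) < length ts"
    "a \<le> knot p a b ts i" "knot p a b ts i \<le> b"
proof -
  show 1: "knot p a b ts i = ts ! nat (i + int p)" using assms by (simp add: knot_def)
  show 2: "nat (i + int p) < length ts" using assms(2,3) by (simp add: Nk_def)
  have "ts ! nat (i + int p) \<in> {a..b}" using assms(1) 2 nth_mem unfolding inv_kv_def by blast
  then show "a \<le> knot p a b ts i" "knot p a b ts i \<le> b" using 1 by auto
qed

lemma knot_mono:
  assumes I: "inv_kv p a b ts" and ij: "i \<le> j"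
  shows "knot p a b ts i \<le> knot p a b ts j"
proof -
  have ab: "a \<le> b" using I unfolding inv_kv_def by auto
  have s: "sorted ts" using I unfolding inv_kv_def by auto
  have "ts \<noteq> []" using I unfolding inv_kv_def by auto
  then have nk: "- int p \<le> Nk p ts" by (simp add: Nk_def)
  consider "i < - int p" | "- int p \<le> i \<and> i \<le> Nk p ts" | "Nk p ts < i" by linarith
  then show ?thesis
  proof cases
    case 1
    then have ki: "knot p a b ts i = a + of_int (i + int p)" by (simp add: knot_def)
    consider "j < - int p" | "- int p \<le> j \<and> j \<le> Nk p ts" | "Nk p ts < j" by linarith
    then show ?thesis
    proof cases
      case 1 then show ?thesis using ki ij by (simp add: knot_def)
    next
      case 2 then show ?thesis using ki knot_range[OF I] \<open>i < - int p\<close>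
        by (smt (verit, ccfv_SIG) of_int_less_0_iff)
    next
      case 3 then have "knot p a b ts j = b + of_int (j - Nk p ts)" using \<open>i < - int p\<close> ij nk
        unfolding knot_def by auto
      then show ?thesis using ki 3 ab \<open>i < - int p\<close>
        by (smt (verit, ccfv_SIG) of_int_less_0_iff of_int_pos)
    qed
  next
    case 2
    consider "- int p \<le> j \<and> j \<le> Nk p ts" | "Nk p ts < j" using ij 2 by linarith
    then show ?thesis
    proof cases
      case 1
      then show ?thesis using 2 knot_range[OF I] ij s
        by (metis nat_mono add_right_mono sorted_nth_mono)
    next
      case 3: 2 then have "knot p a b ts j = b + of_int (j - Nk p ts)" using ij \<open>- int p \<le> i \<and> i \<le> Nk p ts\<close>
        unfolding knot_def by auto
      then show ?thesis using knot_range[OF I] \<open>- int p \<le> i \<and> i \<le> Nk p ts\<close> 3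
        by (smt (verit, ccfv_SIG) of_int_pos)
    qed
  next
    case 3
    then show ?thesis using ij nk unfolding knot_def by auto
  qed
qed

lemma Bsp_supp:
  assumes mono: "\<And>i j. i \<le> j \<Longrightarrow> t i \<le> t j"
  shows "Bsp t i q x \<noteq> 0 \<Longrightarrow> t (i - 1) \<le> x \<and> x < t (i + int q)"
proof (induction q arbitrary: i)
  case 0
  then show ?case by (auto split: if_splits)
next
  case (Suc q)
  then have "Bsp t i q x \<noteq> 0 \<or> Bsp t (i + 1) q x \<noteq> 0" by auto
  then show ?case
  proof
    assume "Bsp t i q x \<noteq> 0"
    then have "t (i - 1) \<le> x \<and> x < t (i + int q)" using Suc.IH by blast
    moreover have "t (i + int q) \<le> t (i + int (Suc q))" by (rule mono) simp
    ultimately show ?thesis by linarith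
  next
    assume "Bsp t (i + 1) q x \<noteq> 0"
    then have "t (i + 1 - 1) \<le> x \<and> x < t (i + 1 + int q)" using Suc.IH by blast
    moreover have "t (i - 1) \<le> t i" by (rule mono) simp
    ultimately show ?thesis by (simp add: add_ac)
  qed
qed

lemma gamma_inv_prop:
  assumes G: "geometry \<Omega> g a b cl" and z: "z \<in> g ` {a..b}"
  shows "gamma_inv cl g a b z \<in> {a..b} \<and> g (gamma_inv cl g a b z) = z"
proof -
  have ex: "\<exists>!t. t \<in> (if cl then {a..<b} else {a..b}) \<and> g t = z"
  proof (cases cl)
    case True
    then have inj: "inj_on g {a..<b}" and gab: "g a = g b" and ab: "a < b"
      using G by (auto simp: geometry_def)
    obtain s where s: "s \<in> {a..b}" "g s = z" using z by auto
    have "\<exists>t. t \<in> {a..<b} \<and> g t = z"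
      using s gab ab by (cases "s = b") auto
    then show ?thesis using inj True by (auto simp: inj_on_def)
  next
    case False
    then have inj: "inj_on g {a..b}" using G by (auto simp: geometry_def)
    then show ?thesis using z False by (auto simp: inj_on_def)
  qed
  then have "gamma_inv cl g a b z \<in> (if cl then {a..<b} else {a..b}) \<and> g (gamma_inv cl g a b z) = z"
    unfolding gamma_inv_def by (rule theI')
  then show ?thesis by (auto split: if_splits)
qed

lemma supp_Rn:
  assumes G: "geometry \<Omega> g a b cl" and I: "inv_kv p a b ts"
  shows "supp_on (g ` {a..b}) (Rn p cl g a b ts0 w0 ts i)
     \<subseteq> g ` ({knot p a b ts (i - 1) .. knot p a b ts (i + int p)} \<inter> {a..b})"
proof -
  let ?K = "g ` ({knot p a b ts (i - 1) .. knot p a b ts (i + int p)} \<inter> {a..b})"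
  have cont: "continuous_on {a..b} g" using G by (simp add: geometry_def)
  have "compact ?K"
    by (rule compact_continuous_image) (auto intro: continuous_on_subset[OF cont] compact_Int)
  then have cl: "closed ?K" by (rule compact_imp_closed)
  have "{z \<in> g ` {a..b}. Rn p cl g a b ts0 w0 ts i z \<noteq> 0} \<subseteq> ?K"
  proof
    fix z assume z: "z \<in> {z \<in> g ` {a..b}. Rn p cl g a b ts0 w0 ts i z \<noteq> 0}"
    define x where "x = gamma_inv cl g a b z"
    have x: "x \<in> {a..b}" "g x = z" using gamma_inv_prop[OF G] z unfolding x_def by auto
    have "Rn p cl g a b ts0 w0 ts i z \<noteq> 0" using z by auto
    then have "Bsp (knot p a b ts) i p x \<noteq> 0" unfolding Rn_def Let_def x_def[symmetric] by auto
    then have "knot p a b ts (i - 1) \<le> x \<and> x < knot p a b ts (i + int p)"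
      using Bsp_supp[of "knot p a b ts"] knot_mono[OF I] by blast
    then show "z \<in> ?K" using x by auto
  qed
  then show ?thesis unfolding supp_on_def using cl by (rule closure_minimal)
qed


definition Iset :: "nat \<Rightarrow> real \<Rightarrow> real \<Rightarrow> real list \<Rightarrow> real \<Rightarrow> int set" where
  "Iset p a b ts s = {i. - int p \<le> i - 1 \<and> i + int p \<le> Nk p ts \<and>
     knot p a b ts (i - 1) \<le> s \<and> s \<le> knot p a b ts (i + int p)}"

lemma count_list_card: "count_list xs s = card {k. k < length xs \<and> xs ! k = s}"
  by (simp add: count_list_eq_length_filter length_filter_conv_card eq_commute)

lemma Iset_finite: "finite (Iset p a b ts s)"
  by (rule finite_subset[of _ "{1 - int p .. Nk p ts - int p}"]) (auto simp: Iset_def)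

lemma Iset_card:
  assumes I: "inv_kv p a b ts"
  shows "card (Iset p a b ts s) \<le> 2 * p + 2"
proof (cases "Iset p a b ts s = {}")
  case True then show ?thesis by simp
next
  case False
  define i0 where "i0 = Min (Iset p a b ts s)"
  have i0: "i0 \<in> Iset p a b ts s" unfolding i0_def using False Iset_finite by (rule Min_in[rotated])
  have sub: "Iset p a b ts s \<subseteq> {i0 .. i0 + 2 * int p + 1}"
  proof
    fix i assume i: "i \<in> Iset p a b ts s"
    have "i0 \<le> i" unfolding i0_def using i Iset_finite by simp
    moreover have "i \<le> i0 + 2 * int p + 1"
    proof (rule ccontr)
      assume "\<not> i \<le> i0 + 2 * int p + 1"
      then have big: "i > i0 + 2 * int p + 1" by simp
      have eq: "knot p a b ts j = s" if j: "i0 + int p \<le> j" "j \<le> i - 1" for j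
      proof -
        have "knot p a b ts j \<le> knot p a b ts (i - 1)" using j by (intro knot_mono[OF I])
        moreover have "knot p a b ts (i0 + int p) \<le> knot p a b ts j" using j by (intro knot_mono[OF I])
        ultimately show ?thesis using i i0 unfolding Iset_def by auto
      qed
      have "{nat (i0 + 2 * int p) ..< nat (i + int p)} \<subseteq> {k. k < length ts \<and> ts ! k = s}"
      proof
        fix k assume k: "k \<in> {nat (i0 + 2 * int p) ..< nat (i + int p)}"
        define j where "j = int k - int p"
        have j: "i0 + int p \<le> j" "j \<le> i - 1" using k i0 unfolding j_def Iset_def by auto
        have r: "- int p \<le> j" "j \<le> Nk p ts" using j i i0 unfolding Iset_def by auto
        have "nat (j + int p) = k" unfolding j_def by simp
        then show "k \<in> {k. k < length ts \<and> ts ! k = s}"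
          using knot_range[OF I r] eq[OF j] by auto
      qed
      then have "card {nat (i0 + 2 * int p) ..< nat (i + int p)} \<le> count_list ts s"
        unfolding count_list_card by (rule card_mono[rotated]) simp
      moreover have "card {nat (i0 + 2 * int p) ..< nat (i + int p)} \<ge> p + 2"
        using big i0 unfolding Iset_def by auto
      moreover have "count_list ts s \<le> p + 1" using I unfolding inv_kv_def by auto
      ultimately show False by linarith
    qed
    ultimately show "i \<in> {i0 .. i0 + 2 * int p + 1}" by simp
  qed
  have "card (Iset p a b ts s) \<le> card {i0 .. i0 + 2 * int p + 1}"
    by (rule card_mono[OF _ sub]) simp
  also have "\<dots> = 2 * p + 2" by simp
  finally show ?thesis .
qed


lemma levels_card:
  fixes nd :: "nat \<Rightarrow> 'a set" and f :: "nat \<Rightarrow> nat"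
  assumes nd: "\<And>l. nd l \<subseteq> nd (Suc l)" and fm: "\<And>l. z \<in> nd l \<Longrightarrow> f l \<le> f (Suc l)"
    and fb: "\<And>l. f l \<le> p + 1"
  shows "card {l. l \<le> L \<and> (l = 0 \<or> (z \<in> nd l \<and> z \<notin> nd (l - 1)) \<or>
      (z \<in> nd (l - 1) \<and> f (l - 1) < f l))} \<le> p + 3"
proof -
  have ndm: "l \<le> l' \<Longrightarrow> nd l \<subseteq> nd l'" for l l'
    by (rule lift_Suc_mono_le[of nd]) (use nd in auto)
  have fmm: "z \<in> nd l \<Longrightarrow> l \<le> l' \<Longrightarrow> f l \<le> f l'" for l l'
  proof (induction l')
    case 0 then show ?case by simp
  next
    case (Suc n)
    show ?case
    proof (cases "l = Suc n")
      case True then show ?thesis by simp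
    next
      case False
      then have "l \<le> n" using Suc.prems by simp
      then have "f l \<le> f n" "z \<in> nd n" using Suc ndm by blast+
      then show ?thesis using fm le_trans by blast
    qed
  qed
  define A where "A = {l. l \<le> L \<and> 1 \<le> l \<and> z \<in> nd l \<and> z \<notin> nd (l - 1)}"
  define B where "B = {l. l \<le> L \<and> 1 \<le> l \<and> z \<in> nd (l - 1) \<and> f (l - 1) < f l}"
  have fA: "finite A" "finite B" unfolding A_def B_def by auto
  have sub: "{l. l \<le> L \<and> (l = 0 \<or> (z \<in> nd l \<and> z \<notin> nd (l - 1)) \<or>
      (z \<in> nd (l - 1) \<and> f (l - 1) < f l))} \<subseteq> {0} \<union> A \<union> B"
    unfolding A_def B_def by auto
  have cA: "card A \<le> 1"
  proof -
    have "\<forall>l1\<in>A. \<forall>l2\<in>A. l1 = l2"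
    proof (intro ballI, rule ccontr)
      fix l1 l2 assume l: "l1 \<in> A" "l2 \<in> A" "l1 \<noteq> l2"
      have "z \<in> nd (l2 - 1)" if "l1 \<in> A" "l2 \<in> A" "l1 < l2" for l1 l2
      proof -
        have "l1 \<le> l2 - 1" using that by simp
        then show ?thesis using that ndm[of l1 "l2 - 1"] unfolding A_def by auto
      qed
      moreover have "z \<notin> nd (l - 1)" if "l \<in> A" for l using that unfolding A_def by auto
      ultimately show False using l by (metis linorder_neqE_nat)
    qed
    then show ?thesis using card_le_Suc0_iff_eq[OF fA(1)] by simp
  qed
  have cB: "card B \<le> p + 1"
  proof -
    have lt: "f l1 < f l2" if "l1 \<in> B" "l2 \<in> B" "l1 < l2" for l1 l2
    proof -
      have "z \<in> nd l1" using that ndm[of "l1 - 1" l1] unfolding B_def by auto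
      then have "f l1 \<le> f (l2 - 1)" using that by (intro fmm) auto
      then show ?thesis using that unfolding B_def by auto
    qed
    have "inj_on f B"
      unfolding inj_on_def by (metis lt linorder_neqE_nat less_irrefl)
    moreover have "f ` B \<subseteq> {1..p+1}" using fb unfolding B_def by (auto simp: Suc_le_eq)
    ultimately have "card B \<le> card {1..p+1}" by (rule card_inj_on_le) simp
    then show ?thesis by simp
  qed
  have "card ({0} \<union> A \<union> B) \<le> card ({0} \<union> A) + card B" by (rule card_Un_le)
  also have "card ({0} \<union> A) \<le> card {0::nat} + card A" by (rule card_Un_le)
  finally have "card ({0} \<union> A \<union> B) \<le> p + 3" using cA cB by simp
  moreover have "card {l. l \<le> L \<and> (l = 0 \<or> (z \<in> nd l \<and> z \<notin> nd (l - 1)) \<or>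
      (z \<in> nd (l - 1) \<and> f (l - 1) < f l))} \<le> card ({0} \<union> A \<union> B)"
    by (rule card_mono[OF _ sub]) (use fA in simp)
  ultimately show ?thesis by linarith
qed

lemma level_incl:
  assumes G: "geometry \<Omega> g a b cl" and I: "inv_kv p a b ts"
    and i: "i \<in> {1 - int p .. Nk p ts - int p - 1}" and ip: "i \<noteq> 1 - int p"
    and z: "z \<in> supp_on (g ` {a..b}) (Rbar p cl g a b ts0 w0 ts i)"
  shows "i \<in> Iset p a b ts (SOME s. s \<in> {a..<b} \<and> g s = z) \<union> Iset p a b ts b"
proof -
  have "z \<in> supp_on (g ` {a..b}) (Rn p cl g a b ts0 w0 ts i)"
    using z ip unfolding Rbar_def by simp
  then obtain s where s: "s \<in> {knot p a b ts (i - 1) .. knot p a b ts (i + int p)}" "s \<in> {a..b}"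
    "g s = z" using supp_Rn[OF G I] by blast
  have inj: "inj_on g {a..<b}" using G unfolding geometry_def
    by (metis atLeastLessThan_subseteq_atLeastAtMost_iff inj_on_subset order_refl)
  have memI: "i \<in> Iset p a b ts s" using s i unfolding Iset_def by auto
  show ?thesis
  proof (cases "s = b")
    case True then show ?thesis using memI by simp
  next
    case False
    then have sab: "s \<in> {a..<b}" using s by auto
    then have "\<exists>s'. s' \<in> {a..<b} \<and> g s' = z" using s by blast
    then have "(SOME s. s \<in> {a..<b} \<and> g s = z) \<in> {a..<b} \<and> g (SOME s. s \<in> {a..<b} \<and> g s = z) = z"
      by (rule someI_ex)
    then have "(SOME s. s \<in> {a..<b} \<and> g s = z) = s" using inj sab s(3) unfolding inj_on_def by blast
    then show ?thesis using memI by simp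
  qed
qed


theorem lemma4p3:
  fixes p :: nat
  assumes "p \<ge> 1"
  shows "\<exists>C2 > 0. \<forall>\<Omega> g a b cl kmax w0 Ks zt L m z.
           setting p \<Omega> g a b cl kmax w0 Ks zt \<and> z \<in> nodes g (Ks L) \<longrightarrow>
           real (card (Zset p cl g a b w0 Ks zt L m z)) \<le> C2"
proof (intro exI[of _ "real ((p + 3) * (4 * p + 5))"] conjI allI impI)
  show "0 < real ((p + 3) * (4 * p + 5))" by simp
  fix \<Omega> g a b cl kmax w0 Ks zt L m z
  assume "setting p \<Omega> g a b cl kmax w0 Ks zt \<and> z \<in> nodes g (Ks L)"
  then have st: "setting p \<Omega> g a b cl kmax w0 Ks zt" by simp
  have G: "geometry \<Omega> g a b cl" using st by (simp add: setting_def)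
  have I0: "inv_kv p a b (Ks 0)" using st by (intro kv_valid_inv[of p g]) (simp add: setting_def)
  have I: "inv_kv p a b (Ks l)" for l
    using st reach_inv[OF _ I0 assms] by (simp add: setting_def KK_def)
  have ref: "refines g (Ks l) (Ks (Suc l))" for l using st by (simp add: setting_def)
  have zt: "zt l i \<in> newnodes g Ks l \<inter> supp_on (g ` {a..b}) (Rbar p cl g a b (Ks 0) w0 (Ks l) i)"
    if "i \<in> Itilde p cl g a b w0 Ks l" for l i using st that by (simp add: setting_def)
  define s0 where "s0 = (SOME s. s \<in> {a..<b} \<and> g s = z)"
  define S where "S l = {1 - int p} \<union> Iset p a b (Ks l) s0 \<union> Iset p a b (Ks l) b" for l
  define nd where "nd l = nodes g (Ks l)" for l
  define f where "f l = nmult g (Ks l) z" for l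
  define Ls where "Ls = {l. l \<le> L \<and> (l = 0 \<or> (z \<in> nd l \<and> z \<notin> nd (l - 1)) \<or>
      (z \<in> nd (l - 1) \<and> f (l - 1) < f l))}"
  have cLs: "card Ls \<le> p + 3" unfolding Ls_def
  proof (rule levels_card)
    show "nd l \<subseteq> nd (Suc l)" for l using ref[of l] unfolding refines_def nd_def by simp
    show "z \<in> nd l \<Longrightarrow> f l \<le> f (Suc l)" for l using ref[of l] unfolding refines_def nd_def f_def by simp
    show "f l \<le> p + 1" for l using I[of l] unfolding f_def nmult_def inv_kv_def by auto
  qed
  have fLs: "finite Ls" unfolding Ls_def by simp
  have cS: "card (S l) \<le> 4 * p + 5" for l
  proof -
    have "card (S l) \<le> card ({1 - int p} \<union> Iset p a b (Ks l) s0) + card (Iset p a b (Ks l) b)"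
      unfolding S_def by (rule card_Un_le)
    also have "card ({1 - int p} \<union> Iset p a b (Ks l) s0) \<le> card {1 - int p} + card (Iset p a b (Ks l) s0)"
      by (rule card_Un_le)
    finally show ?thesis using Iset_card[OF I[of l], of s0] Iset_card[OF I[of l], of b] by simp
  qed
  have fS: "finite (S l)" for l unfolding S_def using Iset_finite by simp
  have sub: "Zset p cl g a b w0 Ks zt L m z \<subseteq> Sigma Ls S"
  proof
    fix x assume x: "x \<in> Zset p cl g a b w0 Ks zt L m z"
    obtain l i where li: "x = (l, i)" by force
    have l: "l \<le> L" and it: "i \<in> Itilde p cl g a b w0 Ks l" and zz: "z = zt l i"
      using x li unfolding Zset_def by auto
    have zn: "z \<in> newnodes g Ks l" and zs: "z \<in> supp_on (g ` {a..b}) (Rbar p cl g a b (Ks 0) w0 (Ks l) i)"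
      using zt[OF it] zz by auto
    have "l \<in> Ls" using zn l unfolding Ls_def newnodes_def nd_def f_def
      by (cases "l = 0") auto
    moreover have "i \<in> S l"
    proof (cases "i = 1 - int p")
      case True then show ?thesis unfolding S_def by simp
    next
      case False
      have "i \<in> {1 - int p .. Nk p (Ks l) - int p - 1}" using it unfolding Itilde_def
        by (auto split: if_splits)
      then show ?thesis using level_incl[OF G I _ False zs] unfolding S_def s0_def by auto
    qed
    ultimately show "x \<in> Sigma Ls S" using li by simp
  qed
  have "card (Zset p cl g a b w0 Ks zt L m z) \<le> card (Sigma Ls S)"
    by (rule card_mono[OF _ sub]) (use fLs fS in auto)
  also have "\<dots> = (\<Sum>l\<in>Ls. card (S l))" using fLs fS by (simp add: card_SigmaI)
  also have "\<dots> \<le> (\<Sum>l\<in>Ls. 4 * p + 5)" by (rule sum_mono) (rule cS)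
  also have "\<dots> = card Ls * (4 * p + 5)" by simp
  also have "\<dots> \<le> (p + 3) * (4 * p + 5)" using cLs by simp
  finally show "real (card (Zset p cl g a b w0 Ks zt L m z)) \<le> real ((p + 3) * (4 * p + 5))"
    by linarith
qed

end
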